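(* For every $1\le j\le d$, $k\ge1$, $\hat x\neq\hat y\in\mathbb Z^d$ and $\eta\in\Omega$, $$c^{(k),j}_{\hat x,\hat y}(\eta)\,[\eta(\hat y)-\eta(\hat x)]=P^{(k),j}(\tau^{\hat y}\eta)-P^{(k),j}(\tau^{\hat x}\eta)-\nabla_jA^{(k),j}_{\hat x,\hat y}(\eta),$$ where $P^{(k),j}(\eta)=\frac12\prod_{i=0}^{k-1}\eta(i\hat e_j)+\frac12\prod_{i=0}^{k-1}\eta(-i\hat e_j)$, $A^{(k),j}_{\hat x,\hat y}=M^{(k),j}_{\hat x,\hat y}-M^{(k),j}_{\hat y,\hat x}$ and $M^{(k),j}_{\hat x,\hat y}(\eta)=\frac12\sum_{\ell=1}^{k-1}\prod_{i_0=1}^{\ell}\eta(\hat x-i_0\hat e_j)\prod_{i_1=0}^{k-1-\ell}\eta(\hat y+i_1\hat e_j)$.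
   Context: $\Omega=\{0,\dots,N_{\mathrm e}\}^{\mathbb Z^d}$, $\{\hat e_1,\dots,\hat e_d\}$ the canonical basis. $\tau^{\hat z}\eta(\hat w)=\eta(\hat w+\hat z)$, $\tau_j\eta(\hat w)=\eta(\hat w+\hat e_j)$, and for $A:\Omega\to\mathbb R$, $\nabla_jA(\eta)=A(\tau_j\eta)-A(\eta)$. For $k\ge1$: $r^{(k),j}_{\hat x,\hat y}(\eta)=\sum_{\ell=1}^k\prod_{i=1}^{k-\ell}\eta(\hat x-i\hat e_j)\prod_{m=1}^{\ell-1}\eta(\hat y+m\hat e_j)$ (empty products equal $1$), and $c^{(k),j}_{\hat x,\hat y}=\frac12\big(r^{(k),j}_{\hat x,\hat y}+r^{(k),j}_{\hat y,\hat x}\big)$. Empty sums equal $0$. *)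

theory Defs
  imports Complex_Main
begin

(* Sites of Z^d are functions 'd \<Rightarrow> int with 'd a finite index type (d = CARD('d));
   configurations eta : Z^d \<Rightarrow> nat, in Omega when bounded by N_e. *)

type_synonym 'd site = "'d \<Rightarrow> int"
type_synonym 'd config = "'d site \<Rightarrow> nat"

definition Omega :: "nat \<Rightarrow> ('d::finite) config set" where
  "Omega Ne = {eta. \<forall>w. eta w \<le> Ne}"

definition ebas :: "'d::finite \<Rightarrow> 'd site" where
  "ebas j = (\<lambda>i. if i = j then 1 else 0)"

definition mv :: "'d::finite site \<Rightarrow> int \<Rightarrow> 'd \<Rightarrow> 'd site" where
  "mv x n j = (\<lambda>i. x i + n * ebas j i)"

definition shift :: "'d::finite site \<Rightarrow> 'd config \<Rightarrow> 'd config" where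
  "shift z eta = (\<lambda>w. eta (\<lambda>i. w i + z i))"

definition tauj :: "'d::finite \<Rightarrow> 'd config \<Rightarrow> 'd config" where
  "tauj j eta = shift (ebas j) eta"

definition nablaj :: "'d::finite \<Rightarrow> ('d config \<Rightarrow> real) \<Rightarrow> 'd config \<Rightarrow> real" where
  "nablaj j A eta = A (tauj j eta) - A eta"

definition rate :: "nat \<Rightarrow> 'd::finite \<Rightarrow> 'd site \<Rightarrow> 'd site \<Rightarrow> 'd config \<Rightarrow> real" where
  "rate k j x y eta = (\<Sum>l = 1..k. (\<Prod>i = 1..k - l. real (eta (mv x (- int i) j)))
                                   * (\<Prod>m = 1..l - 1. real (eta (mv y (int m) j))))"

definition crate :: "nat \<Rightarrow> 'd::finite \<Rightarrow> 'd site \<Rightarrow> 'd site \<Rightarrow> 'd config \<Rightarrow> real" where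
  "crate k j x y eta = (rate k j x y eta + rate k j y x eta) / 2"

definition Pk :: "nat \<Rightarrow> 'd::finite \<Rightarrow> 'd config \<Rightarrow> real" where
  "Pk k j eta = (\<Prod>i = 0..<k. real (eta (mv (\<lambda>_. 0) (int i) j))) / 2
              + (\<Prod>i = 0..<k. real (eta (mv (\<lambda>_. 0) (- int i) j))) / 2"

definition Mk :: "nat \<Rightarrow> 'd::finite \<Rightarrow> 'd site \<Rightarrow> 'd site \<Rightarrow> 'd config \<Rightarrow> real" where
  "Mk k j x y eta = (\<Sum>l = 1..k - 1. (\<Prod>i0 = 1..l. real (eta (mv x (- int i0) j)))
                                     * (\<Prod>i1 = 0..k - 1 - l. real (eta (mv y (int i1) j)))) / 2"

definition Ak :: "nat \<Rightarrow> 'd::finite \<Rightarrow> 'd site \<Rightarrow> 'd site \<Rightarrow> 'd config \<Rightarrow> real" where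
  "Ak k j x y eta = Mk k j x y eta - Mk k j y x eta"

end

theory Submission
  imports Defs
begin

definition RR :: "nat \<Rightarrow> (int \<Rightarrow> real) \<Rightarrow> (int \<Rightarrow> real) \<Rightarrow> real" where
  "RR n X Y = (\<Sum>p=0..n. (\<Prod>i=1..n-p. X (- int i)) * (\<Prod>m=1..p. Y (int m)))"

definition MM :: "nat \<Rightarrow> (int \<Rightarrow> real) \<Rightarrow> (int \<Rightarrow> real) \<Rightarrow> real" where
  "MM n X Y = (\<Sum>l=1..n. (\<Prod>i0=1..l. X (- int i0)) * (\<Prod>i1=0..n-l. Y (int i1))) / 2"

definition TT :: "nat \<Rightarrow> (int \<Rightarrow> real) \<Rightarrow> (int \<Rightarrow> real) \<Rightarrow> nat \<Rightarrow> real" where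
  "TT n X Y p = (\<Prod>i=1..n-p. X (- int i)) * (\<Prod>m=0..p. Y (int m))"

definition SS :: "nat \<Rightarrow> (int \<Rightarrow> real) \<Rightarrow> (int \<Rightarrow> real) \<Rightarrow> nat \<Rightarrow> real" where
  "SS n X Y p = (\<Prod>i=0..n-p. X (- int i)) * (\<Prod>m=1..p. Y (int m))"

lemma RY: "RR n X Y * Y 0 = (\<Sum>p=0..n. TT n X Y p)"
  unfolding RR_def TT_def sum_distrib_right
  by (rule sum.cong) (auto simp: prod.atLeast_Suc_atMost[of 0] mult_ac)

lemma RX: "RR n X Y * X 0 = (\<Sum>p=0..n. SS n X Y p)"
  unfolding RR_def SS_def sum_distrib_right
  by (rule sum.cong) (auto simp: prod.atLeast_Suc_atMost[of 0] mult_ac)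

lemma TS: assumes "p < n"
  shows "TT n (\<lambda>t. X (t+1)) (\<lambda>t. Y (t+1)) p = SS n X Y (Suc p)"
proof -
  obtain q where q: "n - p = Suc q" using assms by (metis Suc_diff_Suc)
  have "n - Suc p = q" using q by simp
  have a: "(\<Prod>i=1..Suc q. X (- int i + 1)) = (\<Prod>i=0..q. X (- int i))"
  proof -
    have "(\<Prod>i=Suc 0..Suc q. X (- int i + 1)) = (\<Prod>i=0..q. X (- int (Suc i) + 1))"
      by (rule prod.shift_bounds_cl_Suc_ivl)
    then show ?thesis by simp
  qed
  have b: "(\<Prod>m=0..p. Y (int m + 1)) = (\<Prod>m=1..Suc p. Y (int m))"
  proof -
    have "(\<Prod>m=Suc 0..Suc p. Y (int m)) = (\<Prod>m=0..p. Y (int (Suc m)))"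
      by (rule prod.shift_bounds_cl_Suc_ivl)
    then show ?thesis by (simp add: add.commute)
  qed
  show ?thesis unfolding TT_def SS_def q \<open>n - Suc p = q\<close> using a b by simp
qed

lemma MMT: "2 * MM n X Y = (\<Sum>p<n. TT n X Y p)"
proof -
  have "2 * MM n X Y = (\<Sum>l=1..n. TT n X Y (n - l))"
  proof -
    have "(\<Sum>l=1..n. (\<Prod>i0=1..l. X (- int i0)) * (\<Prod>i1=0..n-l. Y (int i1))) = (\<Sum>l=1..n. TT n X Y (n - l))"
      unfolding TT_def by (intro sum.cong) auto
    then show ?thesis unfolding MM_def by simp
  qed
  also have "\<dots> = (\<Sum>p<n. TT n X Y p)"
    by (rule sum.reindex_bij_witness[where i="\<lambda>p. n - p" and j="\<lambda>l. n - l"]) auto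
  finally show ?thesis .
qed

lemma key:
  "RR n X Y * (Y 0 - X 0) = (\<Prod>m=0..n. Y (int m)) - (\<Prod>i=0..n. X (- int i))
     - 2 * (MM n (\<lambda>t. X (t+1)) (\<lambda>t. Y (t+1)) - MM n X Y)"
proof -
  have e1: "(\<Sum>p=0..n. TT n X Y p) = TT n X Y n + (\<Sum>p<n. TT n X Y p)"
    by (simp add: atLeast0AtMost lessThan_Suc_atMost[symmetric])
  have e2: "(\<Sum>p=0..n. SS n X Y p) = SS n X Y 0 + (\<Sum>p<n. SS n X Y (Suc p))"
    by (simp add: atLeast0AtMost sum.atMost_shift)
  have e3: "(\<Sum>p<n. SS n X Y (Suc p)) = (\<Sum>p<n. TT n (\<lambda>t. X (t+1)) (\<lambda>t. Y (t+1)) p)"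
    by (rule sum.cong) (auto simp: TS)
  have t: "TT n X Y n = (\<Prod>m=0..n. Y (int m))" by (simp add: TT_def)
  have s: "SS n X Y 0 = (\<Prod>i=0..n. X (- int i))" by (simp add: SS_def)
  show ?thesis
    using RY[of n X Y] RX[of n X Y] e1 e2 e3 t s MMT[of n X Y] MMT[of n "\<lambda>t. X (t+1)" "\<lambda>t. Y (t+1)"]
    by (simp add: algebra_simps)
qed

lemma shift_mv: "shift y eta (mv (\<lambda>_. 0) n j) = eta (mv y n j)"
  unfolding shift_def mv_def by (simp add: add.commute)

lemma tauj_mv: "tauj j eta (mv x n j) = eta (mv x (n + 1) j)"
  unfolding tauj_def shift_def mv_def by (rule arg_cong[where f=eta]) (auto simp: ebas_def)

lemma rate_RR: "rate (Suc n) j x y eta = RR n (\<lambda>t. real (eta (mv x t j))) (\<lambda>t. real (eta (mv y t j)))"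
proof -
  have "rate (Suc n) j x y eta = (\<Sum>l = Suc 0..Suc n. (\<Prod>i = 1..Suc n - l. real (eta (mv x (- int i) j)))
                                   * (\<Prod>m = 1..l - 1. real (eta (mv y (int m) j))))"
    unfolding rate_def by simp
  also have "\<dots> = (\<Sum>l = 0..n. (\<Prod>i = 1..Suc n - Suc l. real (eta (mv x (- int i) j)))
                                   * (\<Prod>m = 1..Suc l - 1. real (eta (mv y (int m) j))))"
    by (rule sum.shift_bounds_cl_Suc_ivl)
  finally show ?thesis unfolding RR_def by simp
qed

lemma Mk_MM: "Mk (Suc n) j x y eta = MM n (\<lambda>t. real (eta (mv x t j))) (\<lambda>t. real (eta (mv y t j)))"
  unfolding Mk_def MM_def by simp

lemma Mk_MM_tau: "Mk (Suc n) j x y (tauj j eta) = MM n (\<lambda>t. real (eta (mv x (t+1) j))) (\<lambda>t. real (eta (mv y (t+1) j)))"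
  unfolding Mk_def MM_def by (simp add: tauj_mv)

lemma Pk_P: "Pk (Suc n) j (shift y eta) = (\<Prod>m=0..n. real (eta (mv y (int m) j))) / 2 + (\<Prod>m=0..n. real (eta (mv y (- int m) j))) / 2"
  unfolding Pk_def shift_mv by (simp add: atLeastLessThanSuc_atLeastAtMost)

lemma mv0: "mv x 0 j = x" unfolding mv_def by simp

theorem mainTheorem3:
  fixes Ne k :: nat and j :: "'d::finite" and x y :: "'d site" and eta :: "'d config"
  assumes "k \<ge> 1" and "x \<noteq> y" and "eta \<in> Omega Ne"
  shows "crate k j x y eta * (real (eta y) - real (eta x))
         = Pk k j (shift y eta) - Pk k j (shift x eta) - nablaj j (Ak k j x y) eta"
proof -
  obtain n where k: "k = Suc n" using assms(1) by (cases k) auto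
  define X where "X = (\<lambda>t. real (eta (mv x t j)))"
  define Y where "Y = (\<lambda>t. real (eta (mv y t j)))"
  have k1: "RR n X Y * (Y 0 - X 0) = (\<Prod>m=0..n. Y (int m)) - (\<Prod>i=0..n. X (- int i))
     - 2 * (MM n (\<lambda>t. X (t+1)) (\<lambda>t. Y (t+1)) - MM n X Y)" by (rule key)
  have k2: "RR n Y X * (X 0 - Y 0) = (\<Prod>m=0..n. X (int m)) - (\<Prod>i=0..n. Y (- int i))
     - 2 * (MM n (\<lambda>t. Y (t+1)) (\<lambda>t. X (t+1)) - MM n Y X)" by (rule key)
  have x0: "X 0 = real (eta x)" and y0: "Y 0 = real (eta y)" by (simp_all add: X_def Y_def mv0)
  have m1: "Mk k j x y (tauj j eta) = MM n (\<lambda>t. X (t+1)) (\<lambda>t. Y (t+1))"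
    unfolding k Mk_MM_tau X_def Y_def ..
  have m2: "Mk k j y x (tauj j eta) = MM n (\<lambda>t. Y (t+1)) (\<lambda>t. X (t+1))"
    unfolding k Mk_MM_tau X_def Y_def ..
  have m3: "Mk k j x y eta = MM n X Y" unfolding k Mk_MM X_def Y_def ..
  have m4: "Mk k j y x eta = MM n Y X" unfolding k Mk_MM X_def Y_def ..
  have c: "crate k j x y eta = (RR n X Y + RR n Y X) / 2"
    unfolding k crate_def rate_RR X_def Y_def ..
  have p1: "Pk k j (shift y eta) = (\<Prod>m=0..n. Y (int m)) / 2 + (\<Prod>m=0..n. Y (- int m)) / 2"
    unfolding k Pk_P Y_def ..
  have p2: "Pk k j (shift x eta) = (\<Prod>m=0..n. X (int m)) / 2 + (\<Prod>m=0..n. X (- int m)) / 2"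
    unfolding k Pk_P X_def ..
  show ?thesis
    unfolding nablaj_def Ak_def m1 m2 m3 m4 c p1 p2 x0[symmetric] y0[symmetric]
    using k1 k2 by (simp add: algebra_simps add_divide_distrib diff_divide_distrib)
qed

end
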